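(* For every $\lambda \in (0,1/2)$ and $\delta > 0$ there are positive constants $\gamma = \gamma(\lambda,\delta)$ and $\beta = \beta(\lambda,\delta)$ such that the following holds. Suppose $p \in (\lambda, 1-\lambda)$, $n \in \mathbb{N}_+$, and $h : \{0,1\}^{2n} \to \{0,1\}$ is a function with $\mathbb{E}_{x \sim \mu_{p,2n}}[h(x)] \geq \delta$ and $\mathbf{I}^{(p)}[h] \leq \gamma \cdot n$. Then $\mathbb{E}_{z \sim \mathcal{D}_{p,2n}}[h(z)] \geq \beta$.
   Context: $\mu_{p,m}$ is the product $p$-biased distribution on $\{0,1\}^m$. For $h:\{0,1\}^m\to\{0,1\}$, $\mathrm{Inf}^{(p)}[h,i] = \mathbb{E}_{x\sim\mu_{p,m}}\big[(h(x)-\mathbb{E}_{s\sim\mu_{p,1}}[h(x^{i\to s})])^2\big]$ (with $x^{i\to s}$ being $x$ with coordinate $i$ set to $s$), and $\mathbf{I}^{(p)}[h] = \sum_{i=1}^m \mathrm{Inf}^{(p)}[h,i]$. The pull-back distribution $\mathcal{D}_{p,2n}$ on $\{0,1\}^{2n}$ is the distribution of $z$ obtained by drawing a uniformly random $2$-to-$1$ map $\pi:[2n]\to[n]$ (each element of $[n]$ has exactly two preimages), independently drawing $x\sim\mu_{p,n}$, and setting $z_i = x_{\pi(i)}$ for $i\in[2n]$. *)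

theory Defs
  imports "HOL-Analysis.Analysis"
begin

text \<open>Points of the cube \{0,1\}^m are functions on the index set \{0..<m\}
  (coordinates 0..m-1), extensional outside (PiE). True encodes 1.\<close>

definition cube :: "nat \<Rightarrow> (nat \<Rightarrow> bool) set" where
  "cube m = PiE {0..<m} (\<lambda>_. UNIV)"

definition pbias :: "real \<Rightarrow> nat \<Rightarrow> (nat \<Rightarrow> bool) \<Rightarrow> real" where
  "pbias p m x = (\<Prod>i<m. if x i then p else 1 - p)"

definition pexp :: "real \<Rightarrow> nat \<Rightarrow> ((nat \<Rightarrow> bool) \<Rightarrow> real) \<Rightarrow> real" where
  "pexp p m f = (\<Sum>x\<in>cube m. pbias p m x * f x)"

text \<open>Influence of coordinate i on a Boolean function h, under mu_{p,m}.
  E_{s ~ mu_{p,1}}[h(x^{i->s})] = p h(x^{i->1}) + (1-p) h(x^{i->0}).\<close>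
definition influence :: "real \<Rightarrow> nat \<Rightarrow> ((nat \<Rightarrow> bool) \<Rightarrow> bool) \<Rightarrow> nat \<Rightarrow> real" where
  "influence p m h i =
     pexp p m (\<lambda>x. (of_bool (h x)
        - (p * of_bool (h (x(i := True))) + (1 - p) * of_bool (h (x(i := False)))))\<^sup>2)"

definition total_influence :: "real \<Rightarrow> nat \<Rightarrow> ((nat \<Rightarrow> bool) \<Rightarrow> bool) \<Rightarrow> real" where
  "total_influence p m h = (\<Sum>i<m. influence p m h i)"

definition two_to_one_maps :: "nat \<Rightarrow> (nat \<Rightarrow> nat) set" where
  "two_to_one_maps n = {\<pi> \<in> PiE {0..<2*n} (\<lambda>_. {0..<n}).
      \<forall>j<n. card {i\<in>{0..<2*n}. \<pi> i = j} = 2}"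

definition pullback_exp :: "real \<Rightarrow> nat \<Rightarrow> ((nat \<Rightarrow> bool) \<Rightarrow> bool) \<Rightarrow> real" where
  "pullback_exp p n h =
     (\<Sum>\<pi>\<in>two_to_one_maps n.
        pexp p n (\<lambda>x. of_bool (h (restrict (\<lambda>i. x (\<pi> i)) {0..<2*n}))))
     / real (card (two_to_one_maps n))"

end

theory Submission
  imports Defs
begin

definition wt :: "nat \<Rightarrow> (nat \<Rightarrow> bool) \<Rightarrow> nat" where
  "wt m z = card {i. i < m \<and> z i}"

definition fl :: "nat \<Rightarrow> (nat \<Rightarrow> bool) \<Rightarrow> (nat \<Rightarrow> bool)" where
  "fl i z = z(i := \<not> z i)"

lemma wt_le: "wt m z \<le> m"
proof -
  have "{i. i < m \<and> z i} \<subseteq> {..<m}" by auto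
  then show ?thesis unfolding wt_def by (metis card_lessThan card_mono finite_lessThan)
qed

lemma wt_fl:
  assumes "i < m"
  shows "wt m (fl i z) = (if z i then wt m z - 1 else wt m z + 1)"
    and "z i \<Longrightarrow> wt m z \<ge> 1"
proof -
  let ?S = "{j. j < m \<and> z j}"
  have fin: "finite ?S" by auto
  show "z i \<Longrightarrow> wt m z \<ge> 1"
    unfolding wt_def using assms fin by (metis (mono_tags, lifting) One_nat_def Suc_leI card_gt_0_iff empty_iff mem_Collect_eq)
  show "wt m (fl i z) = (if z i then wt m z - 1 else wt m z + 1)"
  proof (cases "z i")
    case True
    have "{j. j < m \<and> fl i z j} = ?S - {i}" using True by (auto simp: fl_def)
    then show ?thesis using True assms fin unfolding wt_def by simp
  next
    case False
    have "{j. j < m \<and> fl i z j} = insert i ?S" using False assms by (auto simp: fl_def)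
    then show ?thesis using False assms fin unfolding wt_def by simp
  qed
qed

lemma even_wt_fl: "i < m \<Longrightarrow> even (wt m (fl i z)) \<longleftrightarrow> odd (wt m z)"
  using wt_fl[of i m z] by (cases "z i") auto

lemma fl_fl[simp]: "fl i (fl i z) = z" by (auto simp: fl_def)

lemma fl_cube: "i < m \<Longrightarrow> z \<in> cube m \<Longrightarrow> fl i z \<in> cube m"
  by (auto simp: cube_def fl_def PiE_def extensional_def)

lemma pbias_fl:
  assumes "0 < lam" "lam < p" "p < 1 - lam" "i < m"
  shows "pbias p m z \<le> pbias p m (fl i z) / lam"
proof -
  let ?f = "\<lambda>z j. if z j then p else 1 - p"
  have iA: "i \<in> {..<m}" using assms by auto
  have r: "prod (?f (fl i z)) ({..<m} - {i}) = prod (?f z) ({..<m} - {i})"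
    by (rule prod.cong) (auto simp: fl_def)
  have nn: "prod (?f z) ({..<m} - {i}) \<ge> 0"
    using assms by (intro prod_nonneg) auto
  have lp: "lam * p < lam" "0 \<le> lam * p" using assms by auto
  have fi: "?f z i \<le> ?f (fl i z) i / lam"
    using assms lp by (auto simp: fl_def field_simps)
  have "pbias p m z = ?f z i * prod (?f z) ({..<m} - {i})"
    unfolding pbias_def by (rule prod.remove[OF _ iA]) simp
  also have "\<dots> \<le> (?f (fl i z) i / lam) * prod (?f z) ({..<m} - {i})"
    using fi nn by (rule mult_right_mono)
  also have "\<dots> = pbias p m (fl i z) / lam"
    unfolding pbias_def using prod.remove[OF _ iA, of "?f (fl i z)"] r by auto
  finally show ?thesis .
qed

lemma pbias_nonneg: "0 \<le> p \<Longrightarrow> p \<le> 1 \<Longrightarrow> pbias p m z \<ge> 0"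
  unfolding pbias_def by (intro prod_nonneg) auto

definition T :: "real \<Rightarrow> ((nat \<Rightarrow> bool) \<Rightarrow> bool) \<Rightarrow> nat \<Rightarrow> (nat \<Rightarrow> bool) \<Rightarrow> real" where
  "T p h i x = (of_bool (h x)
        - (p * of_bool (h (x(i := True))) + (1 - p) * of_bool (h (x(i := False)))))\<^sup>2"

lemma T_ge:
  assumes "0 < lam" "lam < p" "p < 1 - lam" "h z" "\<not> h (fl i z)"
  shows "T p h i z \<ge> lam^2"
proof (cases "z i")
  case True
  then have "z(i := True) = z" "z(i := False) = fl i z" by (auto simp: fl_def fun_eq_iff)
  then have "T p h i z = (1 - p)^2" using assms unfolding T_def by simp
  moreover have "lam^2 \<le> (1-p)^2" using assms by (intro power_mono) auto
  ultimately show ?thesis by simp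
next
  case False
  then have "z(i := False) = z" "z(i := True) = fl i z" by (auto simp: fl_def fun_eq_iff)
  then have "T p h i z = p^2" using assms unfolding T_def by (simp add: power2_eq_square algebra_simps)
  moreover have "lam^2 \<le> p^2" using assms by (intro power_mono) auto
  ultimately show ?thesis by simp
qed

lemma partA:
  assumes "0 < lam" "lam < p" "p < 1 - lam" "i < m"
  shows "(\<Sum>z\<in>{z\<in>cube m. odd (wt m z)}. pbias p m z * of_bool (h z))
     \<le> (\<Sum>z\<in>{z\<in>cube m. even (wt m z)}. pbias p m z * of_bool (h z)) / lam
       + influence p m h i / lam^2"
proof -
  let ?O = "{z\<in>cube m. odd (wt m z)}" and ?E = "{z\<in>cube m. even (wt m z)}"
  let ?g = "\<lambda>z. pbias p m z * of_bool (h z)"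
  have finc: "finite (cube m)" unfolding cube_def by (intro finite_PiE) auto
  have lam1: "lam < 1" using assms by auto
  have pt: "?g z \<le> ?g (fl i z) / lam + pbias p m z * T p h i z / lam^2" if "z \<in> ?O" for z
  proof -
    have pb0: "pbias p m z \<ge> 0" "pbias p m (fl i z) \<ge> 0" using assms pbias_nonneg by auto
    have T0: "T p h i z \<ge> 0" unfolding T_def by simp
    have a: "0 \<le> pbias p m z * T p h i z / lam^2" using pb0 T0 by simp
    have b: "0 \<le> ?g (fl i z) / lam" using pb0 assms by simp
    show ?thesis
    proof (cases "h z")
      case False then show ?thesis using a b by simp
    next
      case hz: True
      show ?thesis
      proof (cases "h (fl i z)")
        case True
        then show ?thesis using hz pbias_fl[OF assms, of z] a by simp
      next
        case False
        have "lam^2 \<le> T p h i z" using T_ge[OF assms(1-3) hz False] .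
        then have "pbias p m z * lam^2 \<le> pbias p m z * T p h i z"
          using pb0 by (intro mult_left_mono) auto
        then have "pbias p m z \<le> pbias p m z * T p h i z / lam^2"
          using assms by (simp add: field_simps)
        then show ?thesis using hz b by simp
      qed
    qed
  qed
  have "sum ?g ?O \<le> (\<Sum>z\<in>?O. ?g (fl i z) / lam + pbias p m z * T p h i z / lam^2)"
    by (rule sum_mono) (use pt in auto)
  also have "\<dots> = (\<Sum>z\<in>?O. ?g (fl i z)) / lam + (\<Sum>z\<in>?O. pbias p m z * T p h i z) / lam^2"
    by (simp add: sum.distrib sum_divide_distrib)
  also have "(\<Sum>z\<in>?O. ?g (fl i z)) = sum ?g ?E"
    by (rule sum.reindex_bij_witness[where i="fl i" and j="fl i"])
       (use assms fl_cube even_wt_fl in auto)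
  also have "(\<Sum>z\<in>?O. pbias p m z * T p h i z) \<le> (\<Sum>z\<in>cube m. pbias p m z * T p h i z)"
    by (rule sum_mono2) (use finc assms pbias_nonneg in \<open>auto simp: T_def\<close>)
  also have "(\<Sum>z\<in>cube m. pbias p m z * T p h i z) = influence p m h i"
    unfolding influence_def pexp_def T_def by simp
  finally show ?thesis using assms by (simp add: divide_right_mono)
qed

definition pc :: "nat \<Rightarrow> (nat \<Rightarrow> nat) \<Rightarrow> (nat \<Rightarrow> bool) \<Rightarrow> bool" where
  "pc N \<pi> z = (\<forall>i<N. \<forall>j<N. \<pi> i = \<pi> j \<longrightarrow> z i = z j)"

definition zz :: "nat \<Rightarrow> (nat \<Rightarrow> nat) \<Rightarrow> (nat \<Rightarrow> bool) \<Rightarrow> (nat \<Rightarrow> bool)" where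
  "zz N \<pi> x = restrict (\<lambda>i. x (\<pi> i)) {0..<N}"

lemma finite_cube: "finite (cube m)" unfolding cube_def by (intro finite_PiE) auto

lemma finite_M: "finite (two_to_one_maps n)"
proof -
  have "finite (PiE {0..<2*n} (\<lambda>_. {0..<n}))" by (intro finite_PiE) auto
  then show ?thesis unfolding two_to_one_maps_def by auto
qed

lemma M_fiber:
  assumes "\<pi> \<in> two_to_one_maps n" "j < n"
  shows "card {i\<in>{0..<2*n}. \<pi> i = j} = 2"
  using assms unfolding two_to_one_maps_def by auto

lemma M_range: "\<pi> \<in> two_to_one_maps n \<Longrightarrow> i < 2*n \<Longrightarrow> \<pi> i < n"
  unfolding two_to_one_maps_def by auto

lemma M_ext: "\<pi> \<in> two_to_one_maps n \<Longrightarrow> \<pi> \<in> extensional {0..<2*n}"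
  unfolding two_to_one_maps_def by (auto simp: PiE_def)

lemma M_pre:
  assumes "\<pi> \<in> two_to_one_maps n" "j < n"
  shows "\<exists>i. i < 2*n \<and> \<pi> i = j"
proof -
  have "{i\<in>{0..<2*n}. \<pi> i = j} \<noteq> {}" using M_fiber[OF assms] by (metis card.empty zero_neq_numeral)
  then show ?thesis by auto
qed

lemma wt_zz:
  assumes "\<pi> \<in> two_to_one_maps n"
  shows "wt (2*n) (zz (2*n) \<pi> x) = 2 * wt n x"
proof -
  let ?F = "\<lambda>j. {i\<in>{0..<2*n}. \<pi> i = j}"
  let ?J = "{j. j < n \<and> x j}"
  have eq: "{i. i < 2*n \<and> zz (2*n) \<pi> x i} = (\<Union>j\<in>?J. ?F j)"
    using M_range[OF assms] by (auto simp: zz_def)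
  have "card (\<Union>j\<in>?J. ?F j) = (\<Sum>j\<in>?J. card (?F j))"
    by (rule card_UN_disjoint) auto
  also have "\<dots> = (\<Sum>j\<in>?J. 2)" by (rule sum.cong) (use M_fiber[OF assms] in auto)
  finally show ?thesis unfolding wt_def using eq by simp
qed

definition ix :: "nat \<Rightarrow> (nat \<Rightarrow> nat) \<Rightarrow> (nat \<Rightarrow> bool) \<Rightarrow> (nat \<Rightarrow> bool)" where
  "ix n \<pi> z = restrict (\<lambda>j. z (SOME i. i < 2*n \<and> \<pi> i = j)) {0..<n}"

lemma zz_bij:
  assumes "\<pi> \<in> two_to_one_maps n"
  shows "bij_betw (zz (2*n) \<pi>) (cube n) {z\<in>cube (2*n). pc (2*n) \<pi> z}"
proof (rule bij_betwI[where g="ix n \<pi>"])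
  show "zz (2*n) \<pi> \<in> cube n \<rightarrow> {z\<in>cube (2*n). pc (2*n) \<pi> z}"
  proof (rule Pi_I)
    fix x
    have "zz (2*n) \<pi> x \<in> cube (2*n)" by (simp add: zz_def cube_def restrict_PiE_iff)
    moreover have "pc (2*n) \<pi> (zz (2*n) \<pi> x)" unfolding pc_def zz_def by simp
    ultimately show "zz (2*n) \<pi> x \<in> {z\<in>cube (2*n). pc (2*n) \<pi> z}" by simp
  qed
  show "ix n \<pi> \<in> {z\<in>cube (2*n). pc (2*n) \<pi> z} \<rightarrow> cube n"
    by (rule Pi_I) (simp add: ix_def cube_def restrict_PiE_iff)
  show "ix n \<pi> (zz (2*n) \<pi> x) = x" if "x \<in> cube n" for x
  proof
    fix j
    show "ix n \<pi> (zz (2*n) \<pi> x) j = x j"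
    proof (cases "j < n")
      case True
      then have "\<exists>i. i < 2*n \<and> \<pi> i = j" using M_pre[OF assms] by auto
      then have s: "(SOME i. i < 2*n \<and> \<pi> i = j) < 2*n \<and> \<pi> (SOME i. i < 2*n \<and> \<pi> i = j) = j"
        by (rule someI_ex)
      then show ?thesis using True by (simp add: ix_def zz_def)
    next
      case False
      have "x j = undefined" using False by (intro PiE_arb[OF that[unfolded cube_def]]) simp
      then show ?thesis using False by (simp add: ix_def)
    qed
  qed
  show "zz (2*n) \<pi> (ix n \<pi> z) = z" if "z \<in> {z\<in>cube (2*n). pc (2*n) \<pi> z}" for z
  proof
    fix i
    show "zz (2*n) \<pi> (ix n \<pi> z) i = z i"
    proof (cases "i < 2*n")
      case True
      let ?j = "\<pi> i"
      have jn: "?j < n" using M_range[OF assms True] .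
      have "\<exists>i'. i' < 2*n \<and> \<pi> i' = ?j" using True by auto
      then have s: "(SOME i'. i' < 2*n \<and> \<pi> i' = ?j) < 2*n \<and> \<pi> (SOME i'. i' < 2*n \<and> \<pi> i' = ?j) = ?j"
        by (rule someI_ex)
      have pcz0: "pc (2*n) \<pi> z" using that by blast
      have pcz: "\<forall>a<2*n. \<forall>b<2*n. \<pi> a = \<pi> b \<longrightarrow> z a = z b" using pcz0 unfolding pc_def .
      have "z (SOME i'. i' < 2*n \<and> \<pi> i' = ?j) = z i" using pcz s True by blast
      then show ?thesis using True jn by (simp add: ix_def zz_def)
    next
      case False
      have zc: "z \<in> cube (2*n)" using that by blast
      have "z i = undefined" using False by (intro PiE_arb[OF zc[unfolded cube_def]]) simp
      then show ?thesis using False by (simp add: zz_def)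
    qed
  qed
qed

lemma pbias_wt: "pbias p m x = p ^ wt m x * (1-p) ^ (m - wt m x)"
proof -
  have a: "pbias p m x = prod (\<lambda>_. p) ({..<m} \<inter> {i. x i}) * prod (\<lambda>_. 1 - p) ({..<m} \<inter> - {i. x i})"
    unfolding pbias_def by (rule prod.If_cases) simp
  have b: "card ({..<m} \<inter> {i. x i}) = wt m x" unfolding wt_def
    by (rule arg_cong[where f=card]) auto
  have "{..<m} \<inter> - {i. x i} = {..<m} - {i. i < m \<and> x i}" by auto
  then have c: "card ({..<m} \<inter> - {i. x i}) = m - wt m x"
    unfolding wt_def by (simp add: card_Diff_subset subset_eq)
  show ?thesis using a b c by simp
qed


lemma card_layer: "card {x\<in>cube m. wt m x = k} = m choose k"
proof -
  have "bij_betw (\<lambda>x. {i. i<m \<and> x i}) {x\<in>cube m. wt m x = k} {B. B \<subseteq> {..<m} \<and> card B = k}"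
  proof (rule bij_betwI[where g="\<lambda>B. restrict (\<lambda>i. i\<in>B) {0..<m}"])
    show "(\<lambda>x. {i. i<m \<and> x i}) \<in> {x\<in>cube m. wt m x = k} \<rightarrow> {B. B \<subseteq> {..<m} \<and> card B = k}"
    proof (rule Pi_I)
      fix x assume "x \<in> {x\<in>cube m. wt m x = k}"
      then have "wt m x = k" by blast
      then show "{i. i<m \<and> x i} \<in> {B. B \<subseteq> {..<m} \<and> card B = k}" unfolding wt_def by auto
    qed
    show "(\<lambda>B. restrict (\<lambda>i. i\<in>B) {0..<m}) \<in> {B. B \<subseteq> {..<m} \<and> card B = k} \<rightarrow> {x\<in>cube m. wt m x = k}"
    proof (rule Pi_I)
      fix B assume "B \<in> {B. B \<subseteq> {..<m} \<and> card B = k}"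
      then have B: "B \<subseteq> {..<m}" "card B = k" by auto
      have "{i. i < m \<and> restrict (\<lambda>i. i\<in>B) {0..<m} i} = B" using B by auto
      then have "wt m (restrict (\<lambda>i. i\<in>B) {0..<m}) = k" unfolding wt_def using B by simp
      moreover have "restrict (\<lambda>i. i\<in>B) {0..<m} \<in> cube m" by (simp add: cube_def restrict_PiE_iff)
      ultimately show "restrict (\<lambda>i. i\<in>B) {0..<m} \<in> {x\<in>cube m. wt m x = k}" by blast
    qed
    show "restrict (\<lambda>i. i \<in> {i. i < m \<and> x i}) {0..<m} = x" if "x \<in> {x\<in>cube m. wt m x = k}" for x
    proof
      fix i
      have xc: "x \<in> cube m" using that by blast
      show "restrict (\<lambda>i. i \<in> {i. i < m \<and> x i}) {0..<m} i = x i"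
      proof (cases "i < m")
        case True then show ?thesis by simp
      next
        case False
        have "x i = undefined" using False by (intro PiE_arb[OF xc[unfolded cube_def]]) simp
        then show ?thesis using False by simp
      qed
    qed
    show "{i. i < m \<and> restrict (\<lambda>i. i \<in> B) {0..<m} i} = B" if "B \<in> {B. B \<subseteq> {..<m} \<and> card B = k}" for B
      using that by auto
  qed
  then have "card {x\<in>cube m. wt m x = k} = card {B. B \<subseteq> {..<m} \<and> card B = k}"
    by (rule bij_betw_same_card)
  also have "\<dots> = m choose k" using n_subsets[of "{..<m}" k] by simp
  finally show ?thesis .
qed

lemma perm_exists:
  assumes "wt N z = wt N z'"
  shows "\<exists>\<sigma>. bij_betw \<sigma> {0..<N} {0..<N} \<and> (\<forall>i<N. z' i = z (\<sigma> i))"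
proof -
  define A where "A = {i. i<N \<and> z i}"
  define A' where "A' = {i. i<N \<and> z' i}"
  have fA: "finite A" "finite A'" unfolding A_def A'_def by auto
  have cA: "card A' = card A" using assms unfolding A_def A'_def wt_def by simp
  obtain f where f: "bij_betw f A' A" using finite_same_card_bij[OF fA(2) fA(1) cA] by blast
  have sA: "A \<subseteq> {0..<N}" "A' \<subseteq> {0..<N}" unfolding A_def A'_def by auto
  have cB: "card ({0..<N} - A') = card ({0..<N} - A)"
    using cA sA fA by (simp add: card_Diff_subset)
  obtain g where g: "bij_betw g ({0..<N} - A') ({0..<N} - A)"
    using finite_same_card_bij[OF _ _ cB] by blast
  define \<sigma> where "\<sigma> = (\<lambda>i. if i \<in> A' then f i else g i)"
  have b1: "bij_betw \<sigma> A' A" using f by (rule bij_betw_cong[THEN iffD1, rotated]) (simp add: \<sigma>_def)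
  have b2: "bij_betw \<sigma> ({0..<N} - A') ({0..<N} - A)" using g
    by (rule bij_betw_cong[THEN iffD1, rotated]) (simp add: \<sigma>_def)
  have "bij_betw \<sigma> (A' \<union> ({0..<N} - A')) (A \<union> ({0..<N} - A))"
    by (rule bij_betw_combine[OF b1 b2]) auto
  moreover have "A' \<union> ({0..<N} - A') = {0..<N}" "A \<union> ({0..<N} - A) = {0..<N}" using sA by auto
  ultimately have bs: "bij_betw \<sigma> {0..<N} {0..<N}" by simp
  have "z' i = z (\<sigma> i)" if "i < N" for i
  proof (cases "i \<in> A'")
    case True
    then have "\<sigma> i \<in> A" using f by (auto simp: \<sigma>_def bij_betw_def)
    then show ?thesis using True unfolding A_def A'_def by simp
  next
    case False
    then have "\<sigma> i \<in> {0..<N} - A" using g that by (auto simp: \<sigma>_def bij_betw_def)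
    then show ?thesis using False that unfolding A_def A'_def by simp
  qed
  then show ?thesis using bs by blast
qed

definition cnt :: "nat \<Rightarrow> (nat \<Rightarrow> bool) \<Rightarrow> nat" where
  "cnt n z = card {\<pi>\<in>two_to_one_maps n. pc (2*n) \<pi> z}"

lemma cnt_le:
  assumes "wt (2*n) z = wt (2*n) z'"
  shows "cnt n z \<le> cnt n z'"
proof -
  let ?N = "2*n"
  obtain \<sigma> where bs: "bij_betw \<sigma> {0..<?N} {0..<?N}" and zs: "\<forall>i<?N. z' i = z (\<sigma> i)"
    using perm_exists[OF assms] by blast
  have sig: "\<sigma> i < ?N" if "i < ?N" for i using bs that by (auto simp: bij_betw_def)
  have sigsurj: "\<exists>i<?N. \<sigma> i = i'" if "i' < ?N" for i'
  proof -
    have "i' \<in> \<sigma> ` {0..<?N}" using bs that by (simp add: bij_betw_def)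
    then show ?thesis by auto
  qed
  have siginj: "inj_on \<sigma> {0..<?N}" using bs by (simp add: bij_betw_def)
  define \<Phi> where "\<Phi> = (\<lambda>\<pi>::nat\<Rightarrow>nat. restrict (\<lambda>i. \<pi> (\<sigma> i)) {0..<?N})"
  let ?S = "{\<pi>\<in>two_to_one_maps n. pc ?N \<pi> z}" and ?S' = "{\<pi>\<in>two_to_one_maps n. pc ?N \<pi> z'}"
  have img: "\<Phi> \<pi> \<in> ?S'" if "\<pi> \<in> ?S" for \<pi>
  proof -
    have pM: "\<pi> \<in> two_to_one_maps n" and pcz: "pc ?N \<pi> z" using that by blast+
    have pe: "\<Phi> \<pi> \<in> PiE {0..<?N} (\<lambda>_. {0..<n})"
      unfolding \<Phi>_def using M_range[OF pM] sig by (simp add: restrict_PiE_iff)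
    have fib: "card {i\<in>{0..<?N}. \<Phi> \<pi> i = j} = 2" if "j < n" for j
    proof -
      have ie: "\<sigma> ` {i\<in>{0..<?N}. \<Phi> \<pi> i = j} = {i\<in>{0..<?N}. \<pi> i = j}"
      proof
        show "\<sigma> ` {i\<in>{0..<?N}. \<Phi> \<pi> i = j} \<subseteq> {i\<in>{0..<?N}. \<pi> i = j}"
          using sig by (auto simp: \<Phi>_def)
        show "{i\<in>{0..<?N}. \<pi> i = j} \<subseteq> \<sigma> ` {i\<in>{0..<?N}. \<Phi> \<pi> i = j}"
        proof
          fix i' assume "i' \<in> {i\<in>{0..<?N}. \<pi> i = j}"
          then have i': "i' < ?N" "\<pi> i' = j" by auto
          obtain i where "i < ?N" "\<sigma> i = i'" using sigsurj[OF i'(1)] by blast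
          then show "i' \<in> \<sigma> ` {i\<in>{0..<?N}. \<Phi> \<pi> i = j}" using i' by (auto simp: \<Phi>_def)
        qed
      qed
      have ii: "inj_on \<sigma> {i\<in>{0..<?N}. \<Phi> \<pi> i = j}" by (rule inj_on_subset[OF siginj]) auto
      have "card {i\<in>{0..<?N}. \<Phi> \<pi> i = j} = card {i\<in>{0..<?N}. \<pi> i = j}"
        using card_image[OF ii] ie by simp
      then show ?thesis using M_fiber[OF pM that] by simp
    qed
    have "\<Phi> \<pi> \<in> two_to_one_maps n" unfolding two_to_one_maps_def using pe fib by blast
    moreover have "pc ?N (\<Phi> \<pi>) z'"
      unfolding pc_def
    proof (intro allI impI)
      fix a b assume ab: "a < ?N" "b < ?N" "\<Phi> \<pi> a = \<Phi> \<pi> b"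
      then have "\<pi> (\<sigma> a) = \<pi> (\<sigma> b)" by (simp add: \<Phi>_def)
      then have "z (\<sigma> a) = z (\<sigma> b)" using pcz sig ab unfolding pc_def by blast
      then show "z' a = z' b" using zs ab by simp
    qed
    ultimately show ?thesis by blast
  qed
  have inj: "inj_on \<Phi> ?S"
  proof (rule inj_onI)
    fix \<pi>1 \<pi>2 assume p1: "\<pi>1 \<in> ?S" and p2: "\<pi>2 \<in> ?S" and eq: "\<Phi> \<pi>1 = \<Phi> \<pi>2"
    have e1: "\<pi>1 \<in> extensional {0..<?N}" using p1 M_ext by blast
    have e2: "\<pi>2 \<in> extensional {0..<?N}" using p2 M_ext by blast
    show "\<pi>1 = \<pi>2"
    proof (rule extensionalityI[OF e1 e2])
      fix i' assume "i' \<in> {0..<?N}"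
      then obtain i where i: "i < ?N" "\<sigma> i = i'" using sigsurj by auto
      have "\<Phi> \<pi>1 i = \<Phi> \<pi>2 i" using eq by simp
      then show "\<pi>1 i' = \<pi>2 i'" using i by (simp add: \<Phi>_def)
    qed
  qed
  have "card ?S \<le> card ?S'"
    by (rule card_inj_on_le[OF inj]) (use img finite_M in auto)
  then show ?thesis unfolding cnt_def .
qed

lemma cnt_eq: "wt (2*n) z = wt (2*n) z' \<Longrightarrow> cnt n z = cnt n z'"
  using cnt_le[of n z z'] cnt_le[of n z' z] by simp

lemma absorb: "Suc a * (n choose Suc a) = (n - a) * (n choose a)"
  using binomial_absorption[of a n] binomial_absorb_comp[of n a] by simp

lemma lc_step:
  assumes "a \<le> b"
  shows "(n choose a) * (n choose Suc b) \<le> (n choose Suc a) * (n choose b)"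
proof -
  have le: "Suc a * (n - b) \<le> Suc b * (n - a)" using assms by (intro mult_le_mono) auto
  have l: "((n choose a) * (n choose Suc b)) * (Suc a * Suc b) = (Suc a * (n - b)) * ((n choose a) * (n choose b))"
  proof -
    have "((n choose a) * (n choose Suc b)) * (Suc a * Suc b) = (n choose a) * Suc a * (Suc b * (n choose Suc b))"
      by (simp only: mult_ac)
    also have "\<dots> = (n choose a) * Suc a * ((n - b) * (n choose b))" by (simp only: absorb)
    finally show ?thesis by (simp only: mult_ac)
  qed
  have r: "((n choose Suc a) * (n choose b)) * (Suc a * Suc b) = (Suc b * (n - a)) * ((n choose a) * (n choose b))"
  proof -
    have "((n choose Suc a) * (n choose b)) * (Suc a * Suc b) = (Suc a * (n choose Suc a)) * (n choose b) * Suc b"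
      by (simp only: mult_ac)
    also have "\<dots> = ((n - a) * (n choose a)) * (n choose b) * Suc b" by (simp only: absorb)
    finally show ?thesis by (simp only: mult_ac)
  qed
  have "((n choose a) * (n choose Suc b)) * (Suc a * Suc b) \<le> ((n choose Suc a) * (n choose b)) * (Suc a * Suc b)"
    unfolding l r by (intro mult_right_mono le) simp
  moreover have pos: "0 < Suc a * Suc b" by simp
  ultimately show ?thesis using mult_le_cancel2 by blast
qed

lemma logconc: "d \<le> k \<Longrightarrow> (n choose (k-d)) * (n choose (k+d)) \<le> (n choose k)^2"
proof (induction d)
  case 0 then show ?case by (simp add: power2_eq_square)
next
  case (Suc d)
  have "(n choose (k - Suc d)) * (n choose Suc (k + d)) \<le> (n choose Suc (k - Suc d)) * (n choose (k + d))"
    by (rule lc_step) (use Suc in auto)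
  moreover have "Suc (k - Suc d) = k - d" using Suc by simp
  ultimately have "(n choose (k - Suc d)) * (n choose (k + Suc d)) \<le> (n choose (k - d)) * (n choose (k + d))" by simp
  then show ?case using Suc by simp
qed

lemma logconc2: "j \<le> 2*k \<Longrightarrow> (n choose j) * (n choose (2*k-j)) \<le> (n choose k)^2"
proof (cases "j \<le> k")
  case True
  assume j: "j \<le> 2*k"
  have "(n choose (k-(k-j))) * (n choose (k+(k-j))) \<le> (n choose k)^2" by (rule logconc) simp
  moreover have "k-(k-j) = j" "k+(k-j) = 2*k-j" using True by auto
  ultimately show ?thesis by simp
next
  case False
  assume j: "j \<le> 2*k"
  have "(n choose (k-(j-k))) * (n choose (k+(j-k))) \<le> (n choose k)^2" by (rule logconc) (use j in simp)
  moreover have "k-(j-k) = 2*k-j" "k+(j-k) = j" using False j by auto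
  ultimately show ?thesis by (simp add: mult.commute)
qed

lemma amgm: fixes x y K :: real
  assumes "0 \<le> x" "0 \<le> y" "0 \<le> K" "x * y \<le> K^2"
  shows "x * y \<le> K * ((x + y) / 2)"
proof -
  have s1: "sqrt (x*y) \<le> K" using assms by (metis real_sqrt_le_mono real_sqrt_abs abs_of_nonneg power2_eq_square real_sqrt_mult_self)
  have s2: "sqrt (x*y) \<le> (x+y)/2" using arith_geo_mean_sqrt assms by simp
  have "x * y = sqrt (x*y) * sqrt (x*y)" using assms by simp
  also have "\<dots> \<le> K * ((x+y)/2)" using s1 s2 assms by (intro mult_mono) auto
  finally show ?thesis .
qed

lemma binom_ineq:
  fixes p :: real
  assumes "0 \<le> p" "p \<le> 1" "k \<le> n"
  shows "real ((2*n) choose (2*k)) * p^(2*k) * (1-p)^(2*n-2*k) \<le> real (n choose k) * p^k * (1-p)^(n-k)"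
proof -
  define q where "q = 1 - p"
  have q0: "0 \<le> q" using assms by (simp add: q_def)
  define b where "b = (\<lambda>j. real (n choose j) * p^j * q^(n-j))"
  have b0: "b j \<ge> 0" for j using assms q0 by (simp add: b_def)
  have trm: "real ((n choose j) * (n choose (2*k-j))) * (p^(2*k) * q^(2*n-2*k)) = b j * b (2*k-j)"
    if "j \<le> 2*k" for j
  proof (cases "j \<le> n \<and> 2*k-j \<le> n")
    case True
    have "p^(2*k) = p^j * p^(2*k-j)" using that by (simp flip: power_add)
    moreover have "2*n-2*k = (n-j) + (n-(2*k-j))" using that True by arith
    then have "q^(2*n-2*k) = q^(n-j) * q^(n-(2*k-j))" by (simp only: power_add)
    ultimately show ?thesis by (simp add: b_def)
  next
    case False
    then show ?thesis by (auto simp: b_def binomial_eq_0)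
  qed
  have bk2: "b k * b k = real ((n choose k)^2) * (p^(2*k) * q^(2*n-2*k))"
  proof -
    have "p^(2*k) = p^k * p^k" by (simp add: mult_2 flip: power_add)
    moreover have "2*n-2*k = (n-k) + (n-k)" using assms by arith
    then have "q^(2*n-2*k) = q^(n-k) * q^(n-k)" by (simp only: power_add)
    ultimately show ?thesis by (simp add: b_def power2_eq_square)
  qed
  have pq0: "0 \<le> p^(2*k) * q^(2*n-2*k)" using assms q0 by simp
  have tle: "b j * b (2*k-j) \<le> b k * ((b j + b (2*k-j))/2)" if "j \<le> 2*k" for j
  proof (rule amgm[OF b0 b0 b0])
    have "real ((n choose j) * (n choose (2*k-j))) \<le> real ((n choose k)^2)"
      using logconc2[OF that, of n] by linarith
    then have "real ((n choose j) * (n choose (2*k-j))) * (p^(2*k) * q^(2*n-2*k)) \<le> real ((n choose k)^2) * (p^(2*k) * q^(2*n-2*k))"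
      using pq0 by (rule mult_right_mono)
    then show "b j * b (2*k-j) \<le> (b k)^2" using trm[OF that] bk2 by (simp add: power2_eq_square)
  qed
  have "real ((2*n) choose (2*k)) * p^(2*k) * (1-p)^(2*n-2*k)
      = real (\<Sum>j\<le>2*k. (n choose j) * (n choose (2*k-j))) * (p^(2*k) * q^(2*n-2*k))"
    using vandermonde[of n n "2*k"] by (simp add: q_def mult_2)
  also have "\<dots> = (\<Sum>j\<le>2*k. b j * b (2*k-j))"
    by (simp only: of_nat_sum sum_distrib_right) (rule sum.cong, simp, metis trm of_nat_mult atMost_iff)
  also have "\<dots> \<le> (\<Sum>j\<le>2*k. b k * ((b j + b (2*k-j))/2))"
    by (rule sum_mono) (use tle in simp)
  also have "\<dots> = (\<Sum>j\<le>2*k. (b k/2) * b j + (b k/2) * b (2*k-j))"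
    by (rule sum.cong) (simp_all add: field_simps)
  also have "\<dots> = (b k/2) * (\<Sum>j\<le>2*k. b j) + (b k/2) * (\<Sum>j\<le>2*k. b (2*k-j))"
    by (simp only: sum.distrib sum_distrib_left)
  also have "\<dots> = b k * (((\<Sum>j\<le>2*k. b j) + (\<Sum>j\<le>2*k. b (2*k-j)))/2)"
    by (simp add: field_simps)
  also have "(\<Sum>j\<le>2*k. b (2*k-j)) = (\<Sum>j\<le>2*k. b j)"
    using sum.atLeastAtMost_rev[of "\<lambda>j. b (2*k-j)" 0 "2*k"] by (simp add: atLeast0AtMost)
  also have "(\<Sum>j\<le>2*k. b j) \<le> 1"
  proof -
    have "(\<Sum>j\<le>2*k. b j) = (\<Sum>j\<in>{..2*k} \<inter> {..n}. b j)"
      by (rule sum.mono_neutral_right) (auto simp: b_def binomial_eq_0)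
    also have "\<dots> \<le> (\<Sum>j\<le>n. b j)" by (rule sum_mono2) (auto simp: b0)
    also have "\<dots> = (p + q)^n" by (simp add: binomial_ring b_def mult.commute)
    also have "\<dots> = 1" by (simp add: q_def)
    finally show ?thesis .
  qed
  then have "b k * (((\<Sum>j\<le>2*k. b j) + (\<Sum>j\<le>2*k. b j))/2) \<le> b k * 1"
    using b0[of k] by (intro mult_left_mono) auto
  finally show ?thesis by (simp add: b_def q_def)
qed

lemma card_as_sum: "finite A \<Longrightarrow> card {a\<in>A. P a} = (\<Sum>a\<in>A. if P a then 1 else (0::nat))"
  by (simp add: sum.inter_filter[symmetric])

lemma layer_sum:
  "(\<Sum>z\<in>{z\<in>cube (2*n). wt (2*n) z = m}. cnt n z)
     = card (two_to_one_maps n) * card {x\<in>cube n. 2 * wt n x = m}"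
proof -
  let ?L = "{z\<in>cube (2*n). wt (2*n) z = m}" and ?M = "two_to_one_maps n"
  have finL: "finite ?L" using finite_cube by auto
  have "(\<Sum>z\<in>?L. cnt n z) = (\<Sum>z\<in>?L. \<Sum>\<pi>\<in>?M. if pc (2*n) \<pi> z then 1 else (0::nat))"
    unfolding cnt_def by (rule sum.cong) (simp_all add: card_as_sum[OF finite_M])
  also have "\<dots> = (\<Sum>\<pi>\<in>?M. \<Sum>z\<in>?L. if pc (2*n) \<pi> z then 1 else (0::nat))"
    by (rule sum.swap)
  also have "\<dots> = (\<Sum>\<pi>\<in>?M. card {x\<in>cube n. 2 * wt n x = m})"
  proof (rule sum.cong)
    fix \<pi> assume pM: "\<pi> \<in> ?M"
    have bij: "bij_betw (zz (2*n) \<pi>) (cube n) {z\<in>cube (2*n). pc (2*n) \<pi> z}" by (rule zz_bij[OF pM])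
    have im: "zz (2*n) \<pi> ` {x\<in>cube n. 2 * wt n x = m} = {z\<in>?L. pc (2*n) \<pi> z}"
    proof
      show "zz (2*n) \<pi> ` {x\<in>cube n. 2 * wt n x = m} \<subseteq> {z\<in>?L. pc (2*n) \<pi> z}"
      proof
        fix z assume "z \<in> zz (2*n) \<pi> ` {x\<in>cube n. 2 * wt n x = m}"
        then obtain x where x: "x \<in> cube n" "2 * wt n x = m" and z: "z = zz (2*n) \<pi> x" by blast
        have "z \<in> {z\<in>cube (2*n). pc (2*n) \<pi> z}" using bij x(1) z by (auto simp: bij_betw_def)
        moreover have "wt (2*n) z = m" using wt_zz[OF pM] x z by simp
        ultimately show "z \<in> {z\<in>?L. pc (2*n) \<pi> z}" by blast
      qed
      show "{z\<in>?L. pc (2*n) \<pi> z} \<subseteq> zz (2*n) \<pi> ` {x\<in>cube n. 2 * wt n x = m}"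
      proof
        fix z assume zL: "z \<in> {z\<in>?L. pc (2*n) \<pi> z}"
        then have "z \<in> {z\<in>cube (2*n). pc (2*n) \<pi> z}" by blast
        then have "z \<in> zz (2*n) \<pi> ` cube n" using bij by (simp add: bij_betw_def)
        then obtain x where x: "x \<in> cube n" and z: "z = zz (2*n) \<pi> x" by blast
        have "wt (2*n) z = m" using zL by blast
        then have "2 * wt n x = m" using wt_zz[OF pM] z by simp
        then show "z \<in> zz (2*n) \<pi> ` {x\<in>cube n. 2 * wt n x = m}" using x z by blast
      qed
    qed
    have inj: "inj_on (zz (2*n) \<pi>) {x\<in>cube n. 2 * wt n x = m}"
      using bij by (rule bij_betw_imp_inj_on[THEN inj_on_subset]) auto
    have "(\<Sum>z\<in>?L. if pc (2*n) \<pi> z then 1 else (0::nat)) = card {z\<in>?L. pc (2*n) \<pi> z}"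
      using card_as_sum[OF finL] by simp
    also have "\<dots> = card {x\<in>cube n. 2 * wt n x = m}"
      using card_image[OF inj] im by simp
    finally show "(\<Sum>z\<in>?L. if pc (2*n) \<pi> z then 1 else (0::nat)) = card {x\<in>cube n. 2 * wt n x = m}" .
  qed simp
  finally show ?thesis by simp
qed

lemma cnt_val:
  assumes "z \<in> cube (2*n)" "wt (2*n) z = 2*k"
  shows "((2*n) choose (2*k)) * cnt n z = card (two_to_one_maps n) * (n choose k)"
proof -
  let ?L = "{z\<in>cube (2*n). wt (2*n) z = 2*k}"
  have "(\<Sum>z'\<in>?L. cnt n z') = (\<Sum>z'\<in>?L. cnt n z)"
    by (rule sum.cong) (use cnt_eq assms in auto)
  also have "\<dots> = ((2*n) choose (2*k)) * cnt n z" using card_layer[of "2*n" "2*k"] by simp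
  finally have "((2*n) choose (2*k)) * cnt n z = card (two_to_one_maps n) * card {x\<in>cube n. 2 * wt n x = 2*k}"
    using layer_sum[of n "2*k"] by simp
  moreover have "{x\<in>cube n. 2 * wt n x = 2*k} = {x\<in>cube n. wt n x = k}" by auto
  ultimately show ?thesis using card_layer[of n k] by simp
qed

lemma M_nonempty: "two_to_one_maps n \<noteq> {}"
proof -
  define \<pi> where "\<pi> = restrict (\<lambda>i. i div 2) {0..<2*n}"
  have "\<pi> \<in> PiE {0..<2*n} (\<lambda>_. {0..<n})" unfolding \<pi>_def by (auto simp: restrict_PiE_iff)
  moreover have "card {i\<in>{0..<2*n}. \<pi> i = j} = 2" if "j < n" for j
  proof -
    have "{i\<in>{0..<2*n}. \<pi> i = j} = {2*j, 2*j+1}" using that by (auto simp: \<pi>_def)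
    then show ?thesis by simp
  qed
  ultimately have "\<pi> \<in> two_to_one_maps n" unfolding two_to_one_maps_def by blast
  then show ?thesis by blast
qed


lemma pull_ge:
  assumes p: "0 \<le> p" "p \<le> 1"
  shows "pullback_exp p n h \<ge> (\<Sum>z\<in>{z\<in>cube (2*n). even (wt (2*n) z)}. pbias p (2*n) z * of_bool (h z))"
proof -
  let ?M = "two_to_one_maps n" and ?Q = "cube (2*n)"
  define q where "q = 1 - p"
  have q0: "0 \<le> q" using p by (simp add: q_def)
  define f where "f = (\<lambda>z. p ^ (wt (2*n) z div 2) * q ^ (n - wt (2*n) z div 2) * of_bool (h z))"
  have f0: "f z \<ge> 0" for z using p q0 by (simp add: f_def)
  define cM where "cM = real (card ?M)"
  have cM0: "cM > 0" unfolding cM_def using M_nonempty finite_M by (simp add: card_gt_0_iff)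
  have finQ: "finite ?Q" by (rule finite_cube)
  have inner: "pexp p n (\<lambda>x. of_bool (h (restrict (\<lambda>i. x (\<pi> i)) {0..<2*n})))
       = (\<Sum>z\<in>?Q. if pc (2*n) \<pi> z then f z else 0)" if pM: "\<pi> \<in> ?M" for \<pi>
  proof -
    have "pexp p n (\<lambda>x. of_bool (h (restrict (\<lambda>i. x (\<pi> i)) {0..<2*n})))
        = (\<Sum>x\<in>cube n. f (zz (2*n) \<pi> x))"
      unfolding pexp_def
    proof (rule sum.cong)
      fix x
      have "wt (2*n) (zz (2*n) \<pi> x) div 2 = wt n x" using wt_zz[OF pM] by simp
      then show "pbias p n x * of_bool (h (restrict (\<lambda>i. x (\<pi> i)) {0..<2 * n})) = f (zz (2*n) \<pi> x)"
        by (simp add: f_def pbias_wt q_def zz_def)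
    qed simp
    also have "\<dots> = (\<Sum>z\<in>{z\<in>?Q. pc (2*n) \<pi> z}. f z)"
      by (rule sum.reindex_bij_betw[OF zz_bij[OF pM]])
    also have "\<dots> = (\<Sum>z\<in>?Q. if pc (2*n) \<pi> z then f z else 0)"
      by (rule sum.inter_filter[OF finQ])
    finally show ?thesis .
  qed
  have "(\<Sum>\<pi>\<in>?M. pexp p n (\<lambda>x. of_bool (h (restrict (\<lambda>i. x (\<pi> i)) {0..<2*n}))))
      = (\<Sum>\<pi>\<in>?M. \<Sum>z\<in>?Q. if pc (2*n) \<pi> z then f z else 0)"
    by (rule sum.cong) (simp_all add: inner)
  also have "\<dots> = (\<Sum>z\<in>?Q. \<Sum>\<pi>\<in>?M. if pc (2*n) \<pi> z then f z else 0)"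
    by (rule sum.swap)
  also have "\<dots> = (\<Sum>z\<in>?Q. real (cnt n z) * f z)"
  proof (rule sum.cong)
    fix z
    have "(\<Sum>\<pi>\<in>?M. if pc (2*n) \<pi> z then f z else 0) = (\<Sum>\<pi>\<in>{\<pi>\<in>?M. pc (2*n) \<pi> z}. f z)"
      by (rule sum.inter_filter[OF finite_M, symmetric])
    then show "(\<Sum>\<pi>\<in>?M. if pc (2*n) \<pi> z then f z else 0) = real (cnt n z) * f z"
      by (simp add: cnt_def)
  qed simp
  also have "\<dots> \<ge> (\<Sum>z\<in>{z\<in>?Q. even (wt (2*n) z)}. real (cnt n z) * f z)"
    by (rule sum_mono2[OF finQ]) (use f0 in auto)
  also have "(\<Sum>z\<in>{z\<in>?Q. even (wt (2*n) z)}. real (cnt n z) * f z)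
      \<ge> (\<Sum>z\<in>{z\<in>?Q. even (wt (2*n) z)}. cM * (pbias p (2*n) z * of_bool (h z)))"
  proof (rule sum_mono)
    fix z assume "z \<in> {z\<in>?Q. even (wt (2*n) z)}"
    then have zQ: "z \<in> ?Q" and ev: "even (wt (2*n) z)" by blast+
    obtain k where k: "wt (2*n) z = 2*k" using ev by blast
    have kn: "k \<le> n" using wt_le[of "2*n" z] k by simp
    have cv: "real ((2*n) choose (2*k)) * real (cnt n z) = cM * real (n choose k)"
      using cnt_val[OF zQ k] unfolding cM_def by (metis of_nat_mult)
    have cpos: "real ((2*n) choose (2*k)) > 0" using kn by simp
    have bi: "real ((2*n) choose (2*k)) * p^(2*k) * q^(2*n-2*k) \<le> real (n choose k) * p^k * q^(n-k)"
      using binom_ineq[OF p kn] by (simp add: q_def)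
    have pb: "pbias p (2*n) z = p^(2*k) * q^(2*n-2*k)" by (simp add: pbias_wt k q_def)
    have fz: "f z = p^k * q^(n-k) * of_bool (h z)" by (simp add: f_def k)
    have "real ((2*n) choose (2*k)) * (cM * pbias p (2*n) z)
        = cM * (real ((2*n) choose (2*k)) * p^(2*k) * q^(2*n-2*k))" by (simp add: pb)
    also have "\<dots> \<le> cM * (real (n choose k) * p^k * q^(n-k))"
      using bi cM0 by (intro mult_left_mono) auto
    also have "\<dots> = real ((2*n) choose (2*k)) * (real (cnt n z) * (p^k * q^(n-k)))"
      using cv by (simp add: algebra_simps)
    finally have "cM * pbias p (2*n) z \<le> real (cnt n z) * (p^k * q^(n-k))"
      using cpos by (simp add: mult_le_cancel_left_pos)
    then show "cM * (pbias p (2*n) z * of_bool (h z)) \<le> real (cnt n z) * f z"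
      by (cases "h z") (simp_all add: fz)
  qed
  also have "(\<Sum>z\<in>{z\<in>?Q. even (wt (2*n) z)}. cM * (pbias p (2*n) z * of_bool (h z)))
      = cM * (\<Sum>z\<in>{z\<in>?Q. even (wt (2*n) z)}. pbias p (2*n) z * of_bool (h z))"
    by (simp add: sum_distrib_left)
  finally have "cM * (\<Sum>z\<in>{z\<in>?Q. even (wt (2*n) z)}. pbias p (2*n) z * of_bool (h z))
      \<le> (\<Sum>\<pi>\<in>?M. pexp p n (\<lambda>x. of_bool (h (restrict (\<lambda>i. x (\<pi> i)) {0..<2*n}))))" .
  then show ?thesis unfolding pullback_exp_def using cM0 by (simp add: cM_def field_simps)
qed


lemma final_bound:
  assumes lam: "0 < lam" "lam < 1/2" and dl: "\<delta> > 0"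
    and p: "lam < p" "p < 1 - lam" and n: "0 < n"
    and e: "pexp p (2*n) (\<lambda>x. of_bool (h x)) \<ge> \<delta>"
    and ti: "total_influence p (2*n) h \<le> (lam^2 * \<delta>) * real n"
  shows "pullback_exp p n h \<ge> \<delta> * lam / 4"
proof -
  let ?Q = "cube (2*n)"
  let ?g = "\<lambda>z. pbias p (2*n) z * of_bool (h z)"
  define E where "E = (\<Sum>z\<in>{z\<in>?Q. even (wt (2*n) z)}. ?g z)"
  define Od where "Od = (\<Sum>z\<in>{z\<in>?Q. odd (wt (2*n) z)}. ?g z)"
  have finQ: "finite ?Q" by (rule finite_cube)
  have split: "pexp p (2*n) (\<lambda>x. of_bool (h x)) = E + Od"
  proof -
    have "?Q = {z\<in>?Q. even (wt (2*n) z)} \<union> {z\<in>?Q. odd (wt (2*n) z)}" by auto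
    moreover have "{z\<in>?Q. even (wt (2*n) z)} \<inter> {z\<in>?Q. odd (wt (2*n) z)} = {}" by auto
    ultimately have "sum ?g ?Q = E + Od" unfolding E_def Od_def
      using sum.union_disjoint[of "{z\<in>?Q. even (wt (2*n) z)}" "{z\<in>?Q. odd (wt (2*n) z)}" ?g] finQ
      by simp
    then show ?thesis unfolding pexp_def .
  qed
  have lamp: "0 < lam" "lam < p" "p < 1 - lam" using lam p by auto
  have pA: "Od \<le> E / lam + influence p (2*n) h i / lam^2" if "i < 2*n" for i
    unfolding E_def Od_def by (rule partA[OF lamp that])
  have "(\<Sum>i<2*n. Od) \<le> (\<Sum>i<2*n. E / lam + influence p (2*n) h i / lam^2)"
    by (rule sum_mono) (use pA in simp)
  then have "real (2*n) * Od \<le> real (2*n) * (E / lam) + total_influence p (2*n) h / lam^2"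
    by (simp add: sum.distrib sum_divide_distrib total_influence_def)
  also have "total_influence p (2*n) h / lam^2 \<le> \<delta> * real n"
    using ti lam by (simp add: field_simps)
  finally have "real (2*n) * Od \<le> real (2*n) * (E / lam) + \<delta> * real n" by simp
  then have "real n * (2 * Od) \<le> real n * (2 * (E / lam) + \<delta>)" by (simp add: algebra_simps)
  then have Od: "2 * Od \<le> 2 * (E / lam) + \<delta>" using n by (simp add: mult_le_cancel_left_pos)
  have E0: "E \<ge> 0" unfolding E_def using p lam by (intro sum_nonneg) (simp add: pbias_nonneg)
  have "\<delta> \<le> E + Od" using e split by simp
  then have "2 * \<delta> \<le> 2 * E + 2 * (E / lam) + \<delta>" using Od by simp
  then have "\<delta> \<le> 2 * E + 2 * (E / lam)" by simp
  then have "\<delta> * lam \<le> 2 * E * lam + 2 * E" using lam by (simp add: field_simps)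
  also have "\<dots> \<le> 4 * E"
  proof -
    have "E * lam \<le> E * 1" using lam E0 by (intro mult_left_mono) auto
    then show ?thesis by simp
  qed
  finally have "\<delta> * lam / 4 \<le> E" by simp
  also have "E \<le> pullback_exp p n h" unfolding E_def using pull_ge[of p n h] p lam by simp
  finally show ?thesis .
qed

theorem mainTheorem4:
  shows "\<forall>lam::real. 0 < lam \<and> lam < 1/2 \<longrightarrow>
    (\<forall>\<delta>::real. \<delta> > 0 \<longrightarrow>
      (\<exists>\<gamma>::real. \<gamma> > 0 \<and> (\<exists>\<beta>::real. \<beta> > 0 \<and>
        (\<forall>(p::real) (n::nat) (h::(nat \<Rightarrow> bool) \<Rightarrow> bool).
           lam < p \<and> p < 1 - lam \<and> 0 < n
           \<and> pexp p (2*n) (\<lambda>x. of_bool (h x)) \<ge> \<delta>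
           \<and> total_influence p (2*n) h \<le> \<gamma> * real n
           \<longrightarrow> pullback_exp p n h \<ge> \<beta>))))"
proof (intro allI impI)
  fix lam \<delta> :: real
  assume lam: "0 < lam \<and> lam < 1/2" and dl: "\<delta> > 0"
  show "\<exists>\<gamma>::real. \<gamma> > 0 \<and> (\<exists>\<beta>::real. \<beta> > 0 \<and>
        (\<forall>(p::real) (n::nat) (h::(nat \<Rightarrow> bool) \<Rightarrow> bool).
           lam < p \<and> p < 1 - lam \<and> 0 < n
           \<and> pexp p (2*n) (\<lambda>x. of_bool (h x)) \<ge> \<delta>
           \<and> total_influence p (2*n) h \<le> \<gamma> * real n
           \<longrightarrow> pullback_exp p n h \<ge> \<beta>))"
  proof (intro exI conjI allI impI)
    show "lam^2 * \<delta> > 0" using lam dl by simp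
    show "\<delta> * lam / 4 > 0" using lam dl by simp
    fix p :: real and n :: nat and h :: "(nat \<Rightarrow> bool) \<Rightarrow> bool"
    assume H: "lam < p \<and> p < 1 - lam \<and> 0 < n
           \<and> pexp p (2*n) (\<lambda>x. of_bool (h x)) \<ge> \<delta>
           \<and> total_influence p (2*n) h \<le> (lam^2 * \<delta>) * real n"
    show "pullback_exp p n h \<ge> \<delta> * lam / 4"
      using final_bound[of lam \<delta> p n h] lam dl H by blast
  qed
qed

end
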